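(* For every $n\ge1$ there is an injective map from $\bar{Q}_5(0,n)$ to $P_8(0,n)$.
   Context: Partitions: $\lambda_1\ge\cdots\ge\lambda_\ell>0$, $\ell(\lambda)=\ell$, $\lambda_i=0$ for $i>\ell$, $s(\lambda)$ the smallest part with $s(\emptyset)=+\infty$. Rank $=\lambda_1-\ell$. Durfee symbol $(\alpha,\beta)_j$ of $\lambda$: $j$ is the largest integer with $\lambda_j\ge j$, $\alpha$ is the conjugate of $(\lambda_1-j,\dots,\lambda_j-j)$, $\beta=(\lambda_{j+1},\lambda_{j+2},\dots)$; $|\lambda|=|\alpha|+|\beta|+j^2$. $\bar{Q}_5(0,n)$ is the set of partitions of $n$ whose Durfee symbol $(\alpha,\beta)_j$ satisfies $j\ge1$, $\ell(\beta)-\ell(\alpha)\ge1$, $\alpha_1=\alpha_2=j$, $s(\alpha)\ge2$, $\beta_1=j>\beta_2$ and $s(\beta)=2$. $P_8(0,n)$ is the set of partitions of $n$ with rank $\ge0$ whose Durfee symbol $(\gamma,\delta)_{j'}$ satisfies $j'\ge1$, $\ell(\gamma)=\ell(\delta)$, $\gamma_1=\gamma_2=j'-1$, $\delta_1=j'$, and $\delta$ has no part equal to $2$. *)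

theory Defs
  imports Main "HOL-Library.Extended_Nat"
begin

definition is_partition :: "nat list \<Rightarrow> bool" where
  "is_partition xs \<longleftrightarrow> sorted_wrt (\<ge>) xs \<and> 0 \<notin> set xs"

definition partitions_of :: "nat \<Rightarrow> nat list set" where
  "partitions_of n = {xs. is_partition xs \<and> sum_list xs = n}"

text \<open>1-indexed part, with value 0 beyond the length.\<close>
definition part :: "nat list \<Rightarrow> nat \<Rightarrow> nat" where
  "part xs i = (if 1 \<le> i \<and> i \<le> length xs then xs ! (i - 1) else 0)"

definition smallest :: "nat list \<Rightarrow> enat" where
  "smallest xs = (if xs = [] then \<infinity> else enat (Min (set xs)))"

definition rank :: "nat list \<Rightarrow> int" where
  "rank xs = int (part xs 1) - int (length xs)"

definition durfee :: "nat list \<Rightarrow> nat" where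
  "durfee xs = (if \<exists>j. 1 \<le> j \<and> j \<le> part xs j
                then GREATEST j. 1 \<le> j \<and> j \<le> part xs j else 0)"

text \<open>Conjugate of a weakly decreasing list of naturals (zeros allowed; they are ignored).\<close>
definition conj :: "nat list \<Rightarrow> nat list" where
  "conj mu = map (\<lambda>k. length (filter (\<lambda>x. k \<le> x) mu)) [1..<Suc (Max (insert 0 (set mu)))]"

definition dalpha :: "nat list \<Rightarrow> nat list" where
  "dalpha xs = conj (map (\<lambda>i. part xs i - durfee xs) [1..<Suc (durfee xs)])"

definition dbeta :: "nat list \<Rightarrow> nat list" where
  "dbeta xs = drop (durfee xs) xs"

definition Q5bar :: "nat \<Rightarrow> nat list set" where
  "Q5bar n = {xs \<in> partitions_of n.
     let j = durfee xs; a = dalpha xs; b = dbeta xs in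
     j \<ge> 1 \<and> int (length b) - int (length a) \<ge> 1 \<and>
     part a 1 = j \<and> part a 2 = j \<and> smallest a \<ge> 2 \<and>
     part b 1 = j \<and> j > part b 2 \<and> smallest b = 2}"

definition P8 :: "nat \<Rightarrow> nat list set" where
  "P8 n = {xs \<in> partitions_of n.
     let j = durfee xs; g = dalpha xs; d = dbeta xs in
     rank xs \<ge> 0 \<and> j \<ge> 1 \<and> length g = length d \<and>
     part g 1 = j - 1 \<and> part g 2 = j - 1 \<and> part d 1 = j \<and> 2 \<notin> set d}"

end

theory Submission imports Defs "HOL-Library.Multiset" begin

definition nge :: "nat \<Rightarrow> nat list \<Rightarrow> nat" where
  "nge s xs = length (filter (\<lambda>x. s \<le> x) xs)"

lemma part_nth: "1 \<le> i \<Longrightarrow> i \<le> length xs \<Longrightarrow> part xs i = xs ! (i - 1)"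
  by (simp add: Defs.part_def)

lemma nge_split: "nge v xs = count (mset xs) v + nge (Suc v) xs"
  by (induction xs) (auto simp: nge_def)

lemma nge_mset: "mset xs = mset ys \<Longrightarrow> nge s xs = nge s ys"
  unfolding nge_def by (metis mset_filter size_mset)

lemma sorted_desc_eq:
  assumes "sorted_wrt (\<ge>) xs" "sorted_wrt (\<ge>) (ys::nat list)" "\<And>s. nge s xs = nge s ys"
  shows "xs = ys"
proof -
  have "count (mset xs) v = count (mset ys) v" for v
    using nge_split[of v xs] nge_split[of v ys] assms(3)[of v] assms(3)[of "Suc v"] by simp
  hence m: "mset (rev xs) = mset (rev ys)" by (simp add: multiset_eqI)
  have s1: "sorted (rev xs)" using assms(1) by (simp add: sorted_wrt_rev)
  have s2: "sorted (rev ys)" using assms(2) by (simp add: sorted_wrt_rev)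
  have "sort (rev ys) = rev xs" using properties_for_sort[OF m s1] .
  moreover have "sort (rev ys) = rev ys" using s2 by (simp add: sorted_sort_id)
  ultimately show ?thesis by simp
qed

lemma sum_ind: "sum_list (map (\<lambda>k. (if k \<le> b then 1 else 0::nat)) [1..<Suc M]) = min b M"
  by (induction M) auto

lemma sum_nge:
  assumes "\<forall>x\<in>set xs. x \<le> M"
  shows "sum_list (map (\<lambda>k. nge k xs) [1..<Suc M]) = sum_list xs"
  using assms
proof (induction xs)
  case Nil
  then show ?case by (simp add: nge_def sum_list_triv)
next
  case (Cons b xs)
  have "nge k (b # xs) = (if k \<le> b then 1 else 0) + nge k xs" for k
    by (simp add: nge_def)
  hence "sum_list (map (\<lambda>k. nge k (b # xs)) [1..<Suc M]) =
     sum_list (map (\<lambda>k. (if k \<le> b then 1 else 0)) [1..<Suc M]) + sum_list (map (\<lambda>k. nge k xs) [1..<Suc M])"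
    by (simp add: sum_list_addf)
  moreover have "sum_list (map (\<lambda>k. (if k \<le> b then 1 else 0::nat)) [1..<Suc M]) = b"
    using sum_ind[of b M] Cons.prems by simp
  ultimately show ?case using Cons by simp
qed

lemma sorted_nth_ge:
  assumes "sorted_wrt (\<ge>) (a::nat list)" "i \<le> j" "j < length a"
  shows "a ! j \<le> a ! i"
  using assms sorted_wrt_nth_less[OF assms(1), of i j] by (cases "i = j") auto

lemma nge_K:
  assumes s: "sorted_wrt (\<ge>) (a::nat list)" and r: "1 \<le> r" "r \<le> length a"
  shows "(r \<le> nge k a) \<longleftrightarrow> (k \<le> a ! (r - 1))"
proof
  assume h: "k \<le> a ! (r - 1)"
  have "{0..<r} \<subseteq> {i. i < length a \<and> k \<le> a ! i}"
  proof
    fix i assume "i \<in> {0..<r}"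
    hence "i \<le> r - 1" "i < length a" using r by auto
    moreover have "r - 1 < length a" using r by simp
    ultimately show "i \<in> {i. i < length a \<and> k \<le> a ! i}"
      using sorted_nth_ge[OF s \<open>i \<le> r - 1\<close>] r h by auto
  qed
  hence "card {0..<r} \<le> card {i. i < length a \<and> k \<le> a ! i}"
    by (intro card_mono) auto
  thus "r \<le> nge k a" by (simp add: nge_def length_filter_conv_card)
next
  assume h: "r \<le> nge k a"
  show "k \<le> a ! (r - 1)"
  proof (rule ccontr)
    assume "\<not> k \<le> a ! (r - 1)"
    hence "{i. i < length a \<and> k \<le> a ! i} \<subseteq> {0..<r - 1}"
      using sorted_nth_ge[OF s] r by (auto, meson le_trans not_le le_less_trans not_less)
    hence "card {i. i < length a \<and> k \<le> a ! i} \<le> r - 1"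
      by (metis card_atLeastLessThan card_mono diff_zero finite_atLeastLessThan)
    thus False using h r by (simp add: nge_def length_filter_conv_card)
  qed
qed

lemma max_hd:
  assumes "sorted_wrt (\<ge>) (a::nat list)" "a \<noteq> []"
  shows "Max (insert 0 (set a)) = a ! 0"
proof (rule Max_eqI)
  show "finite (insert 0 (set a))" by simp
  show "a ! 0 \<in> insert 0 (set a)" using assms by simp
  fix y assume "y \<in> insert 0 (set a)"
  thus "y \<le> a ! 0" using sorted_nth_ge[OF assms(1), of 0] by (auto simp: in_set_conv_nth)
qed

lemma conj_len: "length (conj a) = Max (insert 0 (set a))"
  by (simp add: conj_def)

lemma conj_nth: "i < Max (insert 0 (set a)) \<Longrightarrow> conj a ! i = nge (Suc i) a"
  unfolding conj_def by (simp del: upt_Suc add: nge_def)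

lemma conj_part: "1 \<le> i \<Longrightarrow> i \<le> Max (insert 0 (set a)) \<Longrightarrow> part (conj a) i = nge i a"
  by (simp add: part_nth conj_len conj_nth)

lemma conj_set: "set (conj a) = (\<lambda>k. nge k a) ` {1..Max (insert 0 (set a))}"
  by (auto simp: conj_def nge_def)

lemma conj_sum: "sum_list (conj a) = sum_list a"
proof -
  have "\<forall>x\<in>set a. x \<le> Max (insert 0 (set a))" by simp
  from sum_nge[OF this] show ?thesis by (simp add: conj_def nge_def)
qed

lemma filter_upt: "b \<le> M \<Longrightarrow> filter (\<lambda>k. k \<le> b) [1..<Suc M] = [1..<Suc b]"
proof (induction M)
  case 0 then show ?case by simp
next
  case (Suc M)
  show ?case
  proof (cases "b \<le> M")
    case True then show ?thesis using Suc by simp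
  next
    case False
    hence "b = Suc M" using Suc by simp
    thus ?thesis by (simp del: upt_Suc)
  qed
qed

lemma conj_nge:
  assumes s: "sorted_wrt (\<ge>) (a::nat list)" and r: "1 \<le> r" "r \<le> length a"
  shows "nge r (conj a) = a ! (r - 1)"
proof -
  let ?M = "Max (insert 0 (set a))"
  have a0: "a \<noteq> []" using r by auto
  have M: "?M = a ! 0" using max_hd[OF s a0] .
  have le: "a ! (r - 1) \<le> ?M" using M sorted_nth_ge[OF s, of 0 "r - 1"] r by simp
  have "nge r (conj a) = length (filter (\<lambda>k. r \<le> nge k a) [1..<Suc ?M])"
    by (simp add: conj_def nge_def filter_map o_def)
  also have "filter (\<lambda>k. r \<le> nge k a) [1..<Suc ?M] = filter (\<lambda>k. k \<le> a ! (r - 1)) [1..<Suc ?M]"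
    using nge_K[OF s r] by simp
  also have "\<dots> = [1..<Suc (a ! (r - 1))]"
    using le filter_upt by simp
  finally show ?thesis by simp
qed

lemma nge_mono: "s \<le> s' \<Longrightarrow> nge s' xs \<le> nge s xs"
  by (induction xs) (auto simp: nge_def)

lemma nge_all: "nge s xs = length xs \<Longrightarrow> x \<in> set xs \<Longrightarrow> s \<le> x"
  unfolding nge_def by (metis length_filter_less less_irrefl)

lemma nge_le_len: "nge s xs \<le> length xs"
  by (simp add: nge_def)

lemma durfee_eq:
  assumes s: "sorted_wrt (\<ge>) xs" and j: "1 \<le> j" "j \<le> length xs" "j \<le> xs ! (j - 1)"
    and nx: "j < length xs \<Longrightarrow> xs ! j \<le> j"
  shows "durfee xs = j"
proof -
  have Pj: "1 \<le> j \<and> j \<le> part xs j" using j by (simp add: part_nth)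
  have gr: "(GREATEST i. 1 \<le> i \<and> i \<le> part xs i) = j"
  proof (rule Greatest_equality)
    show "1 \<le> j \<and> j \<le> part xs j" by (fact Pj)
    fix i assume h: "1 \<le> i \<and> i \<le> part xs i"
    show "i \<le> j"
    proof (rule ccontr)
      assume "\<not> i \<le> j"
      hence ij: "j < i" by simp
      show False
      proof (cases "i \<le> length xs")
        case True
        hence "part xs i = xs ! (i - 1)" using h by (simp add: part_nth)
        moreover have "xs ! (i - 1) \<le> xs ! j" using sorted_nth_ge[OF s, of j "i - 1"] ij True by simp
        moreover have "xs ! j \<le> j" using nx ij True by simp
        ultimately show False using h ij by simp
      next
        case False
        hence "part xs i = 0" by (simp add: Defs.part_def)
        thus False using h by simp
      qed
    qed
  qed
  show ?thesis unfolding durfee_def using Pj gr by auto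
qed

definition valid :: "nat \<Rightarrow> nat list \<Rightarrow> nat list \<Rightarrow> bool" where
  "valid j mu tau \<longleftrightarrow> 3 \<le> j \<and> length mu = j \<and> sorted_wrt (\<ge>) mu \<and> mu ! 1 = mu ! 0 \<and>
     (\<forall>x\<in>set mu. 2 \<le> x) \<and> sorted_wrt (\<ge>) tau \<and> (\<forall>t\<in>set tau. 2 \<le> t \<and> t < j) \<and>
     2 \<in> set tau \<and> mu ! 0 \<le> length tau"

definition src :: "nat \<Rightarrow> nat list \<Rightarrow> nat list \<Rightarrow> nat list" where
  "src j mu tau = map (\<lambda>x. j + x) mu @ j # tau"

lemma map_part_take: "j \<le> length xs \<Longrightarrow> map (\<lambda>i. part xs i - c) [1..<Suc j] = map (\<lambda>x. x - c) (take j xs)"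
  by (rule nth_equalityI) (auto simp del: upt_Suc simp: part_nth nth_take)

lemma Q5_struct:
  assumes "xs \<in> Q5bar n"
  defines "j \<equiv> durfee xs"
  defines "mu \<equiv> map (\<lambda>x. x - j) (take j xs)"
  defines "tau \<equiv> drop (Suc j) xs"
  shows "valid j mu tau \<and> xs = src j mu tau \<and> sum_list xs = n"
proof -
  have part: "is_partition xs" and sn: "sum_list xs = n" using assms(1) by (auto simp: Q5bar_def partitions_of_def)
  hence sx: "sorted_wrt (\<ge>) xs" and nz: "0 \<notin> set xs" by (auto simp: is_partition_def)
  define a where "a = dalpha xs"
  define b where "b = dbeta xs"
  have c: "j \<ge> 1" "int (length b) - int (length a) \<ge> 1"
    "part a 1 = j" "part a 2 = j" "smallest a \<ge> 2"
    "part b 1 = j" "j > part b 2" "smallest b = 2"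
    using assms(1) unfolding Q5bar_def Let_def a_def b_def j_def by auto
  have bdef: "b = drop j xs" by (simp add: b_def dbeta_def j_def)
  have bne: "b \<noteq> []" using c(1,6) by (auto simp: Defs.part_def)
  hence jl: "j < length xs" using bdef by simp
  have b_eq: "b = xs ! j # tau" using bdef jl by (simp add: tau_def Cons_nth_drop_Suc)
  have xsj: "xs ! j = j" using c(6) b_eq by (simp add: Defs.part_def)
  have adef: "a = conj mu"
    using map_part_take[of j xs j] jl by (simp add: a_def dalpha_def mu_def j_def)
  have lmu: "length mu = j" using jl by (simp add: mu_def)
  have smu: "sorted_wrt (\<ge>) mu" unfolding mu_def sorted_wrt_map
    by (rule sorted_wrt_mono_rel[of _ "(\<ge>)"]) (use sx in auto)
  have stau: "sorted_wrt (\<ge>) tau" using sx by (simp add: tau_def)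
  define M where "M = Max (insert 0 (set mu))"
  have la: "length a = M" by (simp add: adef conj_len M_def)
  have M1: "M \<ge> 1"
  proof (rule ccontr)
    assume "\<not> M \<ge> 1" hence "length a = 0" using la by simp
    thus False using c(1,3) by (simp add: Defs.part_def)
  qed
  have M2: "M \<ge> 2"
  proof (rule ccontr)
    assume "\<not> M \<ge> 2" hence "length a < 2" using la by simp
    thus False using c(1,4) by (simp add: Defs.part_def)
  qed
  have "nge 2 mu = j" using c(4) conj_part[of 2 mu] M2 by (simp add: adef M_def)
  hence mu2: "\<forall>x\<in>set mu. 2 \<le> x" using nge_all lmu by metis
  have ane: "a \<noteq> []" using la M1 by auto
  hence "enat (Min (set a)) \<ge> 2" using c(5) by (simp add: smallest_def)
  hence minA: "Min (set a) \<ge> 2" by (simp add: numeral_eq_enat)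
  have "nge M mu \<in> set a" using conj_set[of mu] M1 by (auto simp: adef M_def)
  hence ngeM: "nge M mu \<ge> 2" using minA Min_le[of "set a" "nge M mu"] by (meson List.finite_set le_trans)
  have lmu2: "2 \<le> length mu" using ngeM nge_le_len[of M mu] by simp
  have mune: "mu \<noteq> []" using lmu2 by auto
  have M0: "M = mu ! 0" using max_hd[OF smu mune] by (simp add: M_def)
  have "M \<le> mu ! 1" using nge_K[OF smu, of 2 M] lmu2 ngeM by simp
  moreover have "mu ! 1 \<le> mu ! 0" using sorted_nth_ge[OF smu, of 0 1] lmu2 by simp
  ultimately have mu10: "mu ! 1 = mu ! 0" using M0 by simp
  have lb: "length b = length tau + 1" using b_eq by simp
  have ktau: "mu ! 0 \<le> length tau" using c(2) la lb M0 by simp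
  have tne: "tau \<noteq> []" using ktau M0 M2 by auto
  have t0: "tau ! 0 < j" using c(7) b_eq tne by (simp add: Defs.part_def Suc_le_eq)
  have tlt: "\<forall>t\<in>set tau. t < j"
    using sorted_nth_ge[OF stau, of 0] t0 by (auto simp: in_set_conv_nth) (meson le_less_trans zero_le)
  have minb: "Min (set b) = 2" using c(8) bne by (simp add: smallest_def numeral_eq_enat)
  have "\<forall>x\<in>set b. 2 \<le> x" using minb by (metis List.finite_set Min_le)
  hence tge: "\<forall>t\<in>set tau. 2 \<le> t" using b_eq by simp
  have "2 \<le> tau ! 0" using tge tne by simp
  hence j3: "3 \<le> j" using t0 by simp
  have "2 \<in> set b" using minb bne by (metis List.finite_set Min_in set_empty)
  hence two: "2 \<in> set tau" using b_eq xsj j3 by auto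
  have valid: "valid j mu tau" unfolding valid_def
    using j3 lmu smu mu10 mu2 stau tlt tge two ktau by auto
  have tk: "take j xs = map (\<lambda>x. j + x) mu"
  proof -
    have "\<forall>x\<in>set (take j xs). j \<le> x"
    proof
      fix x assume "x \<in> set (take j xs)"
      hence "x - j \<in> set mu" by (simp add: mu_def)
      hence "2 \<le> x - j" using mu2 by blast
      thus "j \<le> x" by simp
    qed
    thus ?thesis by (simp add: mu_def map_idI)
  qed
  have "xs = take j xs @ drop j xs" by simp
  also have "\<dots> = src j mu tau" using tk bdef b_eq xsj by (simp add: src_def)
  finally show ?thesis using valid sn by simp
qed

lemma sum_minus: "\<forall>r\<in>set xs. y \<le> r \<Longrightarrow> sum_list (map (\<lambda>r. r - y) xs) + length xs * y = sum_list (xs::nat list)"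
  by (induction xs) auto

lemma valid_y:
  assumes "valid j mu tau"
  shows "\<forall>r\<in>set mu. mu ! (j - 1) \<le> r" "2 \<le> mu ! (j - 1)" "mu ! (j - 1) \<le> mu ! 0"
proof -
  have v: "3 \<le> j" "length mu = j" "sorted_wrt (\<ge>) mu" "\<forall>x\<in>set mu. 2 \<le> x"
    using assms by (auto simp: valid_def)
  show "\<forall>r\<in>set mu. mu ! (j - 1) \<le> r"
    using sorted_nth_ge[OF v(3)] v(1,2) by (auto simp: in_set_conv_nth)
  thus "mu ! (j - 1) \<le> mu ! 0" using v(1,2) by (metis nth_mem not_less_eq_eq numeral_3_eq_3 le_trans zero_less_Suc le_less_Suc_eq less_le_trans not_le)
  show "2 \<le> mu ! (j - 1)" using v by simp
qed

lemma rest_props: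
  assumes v: "valid j mu tau"
  defines "y \<equiv> mu ! (j - 1)"
  defines "a \<equiv> map (\<lambda>r. r - y) mu"
  shows "sorted_wrt (\<ge>) a" "length a = j" "length (conj a) = mu ! 0 - y"
    "\<forall>v\<in>set (conj a). 2 \<le> v \<and> v < j"
    "sum_list (conj a) + j * y = sum_list mu"
    "\<And>r. 1 \<le> r \<Longrightarrow> r \<le> j \<Longrightarrow> nge r (conj a) = mu ! (r - 1) - y"
proof -
  have vv: "3 \<le> j" "length mu = j" "sorted_wrt (\<ge>) mu" "mu ! 1 = mu ! 0" "\<forall>x\<in>set mu. 2 \<le> x"
    using v by (auto simp: valid_def)
  note yy = valid_y[OF v, folded y_def]
  show sa: "sorted_wrt (\<ge>) a" unfolding a_def sorted_wrt_map
    by (rule sorted_wrt_mono_rel[of _ "(\<ge>)"]) (use vv in auto)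
  show la: "length a = j" using vv by (simp add: a_def)
  have ane: "a \<noteq> []" using la vv by auto
  have M: "Max (insert 0 (set a)) = mu ! 0 - y" using max_hd[OF sa ane] ane by (simp add: a_def)
  show "length (conj a) = mu ! 0 - y" using M by (simp add: conj_len)
  show "\<forall>v\<in>set (conj a). 2 \<le> v \<and> v < j"
  proof
    fix v assume "v \<in> set (conj a)"
    then obtain k where k: "1 \<le> k" "k \<le> mu ! 0 - y" "v = nge k a" using conj_set[of a] M by auto
    have a1: "a ! 1 = mu ! 0 - y" using vv by (simp add: a_def)
    have aj: "a ! (j - 1) = 0" using vv by (simp add: a_def y_def)
    have "2 \<le> nge k a" using nge_K[OF sa, of 2 k] a1 k la vv by simp
    moreover have "\<not> j \<le> nge k a" using nge_K[OF sa, of j k] aj k la vv by simp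
    ultimately show "2 \<le> v \<and> v < j" using k by simp
  qed
  show "sum_list (conj a) + j * y = sum_list mu"
    using sum_minus[OF yy(1)] vv by (simp add: conj_sum a_def)
  fix r assume r: "1 \<le> r" "r \<le> j"
  show "nge r (conj a) = mu ! (r - 1) - y"
    using conj_nge[OF sa, of r] r la vv by (simp add: a_def)
qed

definition tgt :: "nat \<Rightarrow> nat list \<Rightarrow> nat list \<Rightarrow> nat list" where
  "tgt j mu tau = (let y = mu ! (j - 1); k = length tau in
    ((j + k + y) # (j + nge 3 tau + y + 1) # map (\<lambda>s. j + nge s tau + y) [4..<Suc j]) @
    (j # j # rev (sort (map Suc (conj (map (\<lambda>r. r - y) mu)))) @ replicate (k + 2 * y - (mu ! 0 + 1)) 1))"

lemma nge_Cons[simp]: "nge s (x # xs) = (if s \<le> x then 1 else 0) + nge s xs"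
  by (simp add: nge_def)
lemma nge_Nil[simp]: "nge s [] = 0"
  by (simp add: nge_def)
lemma nge_append[simp]: "nge s (xs @ ys) = nge s xs + nge s ys"
  by (simp add: nge_def)
lemma nge_full: "\<forall>x\<in>set xs. s \<le> x \<Longrightarrow> nge s xs = length xs"
  by (simp add: nge_def)
lemma nge_zero: "\<forall>x\<in>set xs. x < s \<Longrightarrow> nge s xs = 0"
  by (induction xs) auto

lemma sum_list_const_plus: "sum_list (map (\<lambda>s. c + f s) xs) = length xs * c + sum_list (map f xs)"
  by (induction xs) auto

lemma sum_list_Suc: "sum_list (map Suc xs) = sum_list xs + length xs"
  by (induction xs) auto

lemma sum_list_sort: "sum_list (sort xs) = sum_list (xs::nat list)"
  by (metis mset_sort sum_mset_sum_list)

lemma sorted_replicate: "sorted_wrt (\<ge>) (replicate n (x::nat))"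
  by (induction n) auto

lemma tgt_props:
  assumes v: "valid j mu tau"
  defines "T \<equiv> tgt j mu tau"
  shows "is_partition T" "sum_list T = sum_list (src j mu tau)" "durfee T = j"
    "rank T \<ge> 0" "length (dalpha T) = length (dbeta T)"
    "part (dalpha T) 1 = j - 1" "part (dalpha T) 2 = j - 1" "part (dbeta T) 1 = j"
    "2 \<notin> set (dbeta T)"
proof -
  have vv: "3 \<le> j" "length mu = j" "sorted_wrt (\<ge>) mu" "mu ! 1 = mu ! 0" "\<forall>x\<in>set mu. 2 \<le> x"
    "sorted_wrt (\<ge>) tau" "\<forall>t\<in>set tau. 2 \<le> t \<and> t < j" "2 \<in> set tau" "mu ! 0 \<le> length tau"
    using v by (auto simp: valid_def)
  define y where "y = mu ! (j - 1)"
  define k where "k = length tau"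
  define m where "m = mu ! 0"
  define n3 where "n3 = nge 3 tau"
  define rest where "rest = conj (map (\<lambda>r. r - y) mu)"
  define R where "R = rev (sort (map Suc rest))"
  define pad where "pad = k + 2 * y - (m + 1)"
  define P1 where "P1 = map (\<lambda>s. j + nge s tau + y) [4..<Suc j]"
  define H where "H = (j + k + y) # (j + n3 + y + 1) # P1"
  define Z where "Z = j # j # R @ replicate pad 1"
  have Teq: "T = H @ Z"
    by (simp add: T_def tgt_def Let_def H_def Z_def P1_def R_def rest_def pad_def y_def k_def m_def n3_def)
  note yy = valid_y[OF v, folded y_def m_def]
  note rp = rest_props[OF v, folded y_def, folded rest_def m_def]
  have lP1: "length P1 = j - 3" using vv(1) by (simp add: P1_def, arith)
  have lH: "length H = j - 1" using vv(1) lP1 by (simp add: H_def)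
  have lrest: "length rest = m - y" using rp(3) .
  have mk: "m \<le> k" using vv(9) by (simp add: m_def k_def)
  have pad_eq: "pad + m + 1 = k + 2 * y" using mk yy by (simp add: pad_def)
  have n3k: "n3 < k" unfolding n3_def k_def nge_def
    by (rule length_filter_less[OF vv(8)]) simp
  have P1le: "\<forall>x\<in>set P1. j + y \<le> x \<and> x \<le> j + n3 + y"
    using nge_mono[of 3 _ tau] by (auto simp: P1_def n3_def)
  have setR: "set R = Suc ` set rest" by (simp add: R_def)
  have Rb: "\<forall>x\<in>set R. 3 \<le> x \<and> x \<le> j" using rp(4) setR by auto
  have Zle: "\<forall>x\<in>set Z. 1 \<le> x \<and> x \<le> j" using Rb vv(1) by (auto simp: Z_def)
  have Hge: "\<forall>x\<in>set H. j \<le> x" using P1le by (auto simp: H_def)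
  have sP1: "sorted_wrt (\<ge>) P1" unfolding P1_def sorted_wrt_map
    by (rule sorted_wrt_mono_rel[where P="(<)"]) (auto simp del: upt_Suc intro: nge_mono)
  have sH: "sorted_wrt (\<ge>) H" using sP1 P1le n3k by (auto simp: H_def)
  have sR: "sorted_wrt (\<ge>) R" by (simp add: R_def sorted_wrt_rev)
  have sZ: "sorted_wrt (\<ge>) Z"
    using sR Rb vv(1) sorted_replicate[of pad 1] by (auto simp: Z_def sorted_wrt_append)
  have sT: "sorted_wrt (\<ge>) T" unfolding Teq sorted_wrt_append using sH sZ Hge Zle by (meson order.trans)
  have nzT: "0 \<notin> set T"
  proof
    assume "0 \<in> set T" hence "0 \<in> set H \<or> 0 \<in> set Z" using Teq by simp
    thus False using Hge Zle vv(1) by fastforce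
  qed
  show "is_partition T" using sT nzT by (simp add: is_partition_def)
  have lZ: "length Z = 2 + (m - y) + pad" using lrest by (simp add: Z_def R_def)
  have lT: "length T = j + k + y" using lH lZ pad_eq yy vv(1) Teq by simp
  have sumP1: "sum_list P1 = (j - 3) * (j + y) + sum_list (map (\<lambda>s. nge s tau) [4..<Suc j])"
  proof -
    have "P1 = map (\<lambda>s. (j + y) + nge s tau) [4..<Suc j]" by (simp add: P1_def add_ac)
    thus ?thesis using vv(1) by (simp del: upt_Suc add: sum_list_const_plus)
  qed
  have u4: "[1..<4] = [1,2,3::nat]" by (simp add: upt_rec)
  have ups: "[1..<Suc j] = 1 # 2 # 3 # [4..<Suc j]" proof - have "[1..<Suc j] = [1..<4] @ [4..<Suc j]" using vv(1) upt_add_eq_append[of 1 4 "Suc j - 4"] by (simp del: upt_Suc) thus ?thesis using u4 by simp qed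
  have "sum_list (map (\<lambda>s. nge s tau) [1..<Suc j]) = sum_list tau"
    by (rule sum_nge) (use vv(7) in auto)
  moreover have "nge 1 tau = k" "nge 2 tau = k" using vv(7) by (auto intro!: nge_full simp: k_def)
  ultimately have stau: "k + k + n3 + sum_list (map (\<lambda>s. nge s tau) [4..<Suc j]) = sum_list tau"
    using ups by (simp add: n3_def)
  have sumR: "sum_list R = sum_list rest + (m - y)"
    using lrest by (simp add: R_def sum_list_Suc sum_list_sort)
  have srest: "sum_list rest + j * y = sum_list mu" using rp(5) .
  have sumZ: "sum_list Z = 2 * j + sum_list rest + (m - y) + pad" using sumR by (simp add: Z_def sum_list_replicate)
  have sumH: "sum_list H = (j + k + y) + (j + n3 + y + 1) + sum_list P1" by (simp add: H_def)
  have ssrc: "sum_list (src j mu tau) = j * j + sum_list mu + j + sum_list tau"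
    using vv(2) by (simp add: src_def sum_list_const_plus)
  obtain i where i: "j = i + 3" using vv(1) by (metis add.commute le_Suc_ex)
  obtain d where d: "m = y + d" using yy(3) by (metis le_Suc_ex)
  have e1: "j * j = i * j + 3 * j" "j * y = i * y + 3 * y" "j - 3 = i" using i by (auto simp: algebra_simps)
  have e2: "(j - 3) * (j + y) = i * j + i * y" using e1(3) by (simp add: algebra_simps)
  have e3: "m - y = d" using d by simp
  have sTT: "sum_list T = sum_list H + sum_list Z" using Teq by simp
  show "sum_list T = sum_list (src j mu tau)"
    using sTT sumH sumZ sumP1 stau srest ssrc pad_eq d e1 e2 e3 by linarith
  have Tj1: "T ! (j - 1) = j" using Teq lH by (simp add: nth_append Z_def)
  have Tj: "T ! j = j" using Teq lH vv(1) by (auto simp: nth_append Z_def)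
  show dT: "durfee T = j" by (rule durfee_eq) (use sT vv(1) lT Tj1 Tj in auto)
  have dbT: "dbeta T = j # R @ replicate pad 1"
  proof -
    have "dbeta T = drop j T" using dT by (simp add: dbeta_def)
    also have "\<dots> = j # R @ replicate pad 1" using Teq lH vv(1) by (simp add: Z_def)
    finally show ?thesis .
  qed
  show "part (dbeta T) 1 = j" using dbT by (simp add: part_nth)
  show "2 \<notin> set (dbeta T)" using dbT Rb vv(1) by auto
  have ldb: "length (dbeta T) = k + y" using dbT lrest pad_eq yy by (simp add: R_def)
  define nu where "nu = (k + y) # (n3 + y + 1) # map (\<lambda>s. nge s tau + y) [4..<Suc j] @ [0]"
  have tk: "take j T = H @ [j]" using Teq lH vv(1) by (simp add: Z_def)
  have daT: "dalpha T = conj nu"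
  proof -
    have "dalpha T = conj (map (\<lambda>i. part T i - j) [1..<Suc j])"
      using dT by (simp add: dalpha_def)
    also have "map (\<lambda>i. part T i - j) [1..<Suc j] = map (\<lambda>x. x - j) (take j T)"
      using map_part_take[of j T j] lT by simp
    also have "map (\<lambda>x. x - j) (take j T) = nu" by (simp add: tk H_def P1_def nu_def)
    finally show ?thesis .
  qed
  have nk: "\<And>s. 3 \<le> s \<Longrightarrow> nge s tau \<le> k"
    using nge_mono[of 3 _ tau] n3k unfolding n3_def by (meson less_imp_le le_trans)
  have nule: "\<forall>x\<in>set nu. x \<le> k + y" using nk n3k by (auto simp del: upt_Suc simp: nu_def n3_def)
  have Mnu: "Max (insert 0 (set nu)) = k + y"
    by (rule Max_eqI) (use nule in \<open>auto simp: nu_def\<close>)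
  show "length (dalpha T) = length (dbeta T)" using daT Mnu ldb by (simp add: conj_len)
  have ky2: "2 \<le> k + y" using yy by simp
  have nu1: "nge 1 nu = j - 1" using yy vv(1) by (simp add: nu_def nge_full, arith)
  have nu2: "nge 2 nu = j - 1" using yy vv(1) by (simp add: nu_def nge_full, arith)
  show "part (dalpha T) 1 = j - 1" using daT Mnu ky2 nu1 by (simp add: conj_part)
  show "part (dalpha T) 2 = j - 1" using daT Mnu ky2 nu2 by (simp add: conj_part)
  show "rank T \<ge> 0" using lT sT Teq by (simp add: rank_def part_nth H_def)
qed

lemma nge_Suc_map: "nge (Suc r) (map Suc xs) = nge r xs"
  by (induction xs) auto

lemma tgt_shape:
  assumes v: "valid j mu tau"
  shows "tgt j mu tau ! 0 = j + length tau + mu ! (j - 1)"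
    "tgt j mu tau ! 1 = j + nge 3 tau + mu ! (j - 1) + 1"
    "\<And>s. 4 \<le> s \<Longrightarrow> s \<le> j \<Longrightarrow> tgt j mu tau ! (s - 2) = j + nge s tau + mu ! (j - 1)"
    "\<And>r. 1 \<le> r \<Longrightarrow> nge (Suc r) (drop (Suc j) (tgt j mu tau)) = nge r (conj (map (\<lambda>x. x - mu ! (j - 1)) mu))"
proof -
  have j3: "3 \<le> j" using v by (simp add: valid_def)
  define y where "y = mu ! (j - 1)"
  define rest where "rest = conj (map (\<lambda>r. r - y) mu)"
  define P1 where "P1 = map (\<lambda>s. j + nge s tau + y) [4..<Suc j]"
  define R where "R = rev (sort (map Suc rest))"
  define pad where "pad = length tau + 2 * y - (mu ! 0 + 1)"
  have T: "tgt j mu tau = ((j + length tau + y) # (j + nge 3 tau + y + 1) # P1) @ (j # j # R @ replicate pad 1)"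
    by (simp add: tgt_def Let_def y_def rest_def P1_def R_def pad_def)
  have lP1: "length P1 = j - 3" using j3 by (simp add: P1_def, arith)
  show "tgt j mu tau ! 0 = j + length tau + mu ! (j - 1)" using T by (simp add: y_def)
  show "tgt j mu tau ! 1 = j + nge 3 tau + mu ! (j - 1) + 1" using T by (simp add: y_def)
  fix s assume s: "4 \<le> s" "s \<le> j"
  have "tgt j mu tau ! (s - 2) = P1 ! (s - 4)"
  proof -
    have "s - 2 = Suc (Suc (s - 4))" using s by simp
    hence "tgt j mu tau ! (s - 2) = (P1 @ (j # j # R @ replicate pad 1)) ! (s - 4)" using T by simp
    also have "\<dots> = P1 ! (s - 4)" using lP1 s by (simp add: nth_append, arith)
    finally show ?thesis .
  qed
  also have "P1 ! (s - 4) = j + nge s tau + y"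
  proof -
    have "[4..<Suc j] ! (s - 4) = s" using s by (subst nth_upt) auto
    thus ?thesis using s by (simp del: upt_Suc add: P1_def)
  qed
  finally show "tgt j mu tau ! (s - 2) = j + nge s tau + mu ! (j - 1)" by (simp add: y_def)
next
  fix r :: nat assume r: "1 \<le> r"
  have j3: "3 \<le> j" using v by (simp add: valid_def)
  define y where "y = mu ! (j - 1)"
  define rest where "rest = conj (map (\<lambda>r. r - y) mu)"
  define P1 where "P1 = map (\<lambda>s. j + nge s tau + y) [4..<Suc j]"
  define R where "R = rev (sort (map Suc rest))"
  define pad where "pad = length tau + 2 * y - (mu ! 0 + 1)"
  have T: "tgt j mu tau = ((j + length tau + y) # (j + nge 3 tau + y + 1) # P1) @ (j # j # R @ replicate pad 1)"
    by (simp add: tgt_def Let_def y_def rest_def P1_def R_def pad_def)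
  have lP1: "length P1 = j - 3" using j3 by (simp add: P1_def, arith)
  have "drop (Suc j) (tgt j mu tau) = R @ replicate pad 1"
  proof -
    have lH: "length ((j + length tau + y) # (j + nge 3 tau + y + 1) # P1) = j - 1" using lP1 j3 by simp
    have e: "Suc j - (j - 1) = 2" using j3 by simp
    show ?thesis unfolding T drop_append lH e using lH by simp
  qed
  hence "nge (Suc r) (drop (Suc j) (tgt j mu tau)) = nge (Suc r) R"
    using r by (simp add: nge_zero)
  also have "\<dots> = nge (Suc r) (map Suc rest)" by (rule nge_mset) (simp add: R_def)
  also have "\<dots> = nge r rest" by (rule nge_Suc_map)
  finally show "nge (Suc r) (drop (Suc j) (tgt j mu tau)) = nge r (conj (map (\<lambda>x. x - mu ! (j - 1)) mu))"
    by (simp add: rest_def y_def)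
qed

lemma tgt_inj:
  assumes v1: "valid j mu tau" and v2: "valid j' mu' tau'" and eq: "tgt j mu tau = tgt j' mu' tau'"
  shows "j = j' \<and> mu = mu' \<and> tau = tau'"
proof -
  have jj: "j = j'" using tgt_props(3)[OF v1] tgt_props(3)[OF v2] eq by simp
  note v2' = v2[folded jj]
  note eq' = eq[folded jj]
  have w1: "3 \<le> j" "length mu = j" "sorted_wrt (\<ge>) tau" "\<forall>t\<in>set tau. 2 \<le> t \<and> t < j"
    using v1 by (auto simp: valid_def)
  have w2: "length mu' = j" "sorted_wrt (\<ge>) tau'" "\<forall>t\<in>set tau'. 2 \<le> t \<and> t < j"
    using v2' by (auto simp: valid_def)
  have yy: "mu ! (j - 1) = mu' ! (j - 1)"
  proof (cases "j = 3")
    case True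
    have "nge 3 tau = 0" "nge 3 tau' = 0" using w1(4) w2(3) True by (auto intro!: nge_zero)
    thus ?thesis using tgt_shape(2)[OF v1] tgt_shape(2)[OF v2'] eq' by simp
  next
    case False
    hence j4: "4 \<le> j" using w1(1) by simp
    have "nge j tau = 0" "nge j tau' = 0" using w1(4) w2(3) by (auto intro!: nge_zero)
    thus ?thesis using tgt_shape(3)[OF v1 j4 order.refl] tgt_shape(3)[OF v2' j4 order.refl] eq' by simp
  qed
  have kk: "length tau = length tau'" using tgt_shape(1)[OF v1] tgt_shape(1)[OF v2'] eq' yy by simp
  have "nge s tau = nge s tau'" for s
  proof -
    consider "s \<le> 2" | "s = 3" | "4 \<le> s \<and> s \<le> j" | "j < s" by linarith
    thus ?thesis
    proof cases
      case 1
      have "nge s tau = length tau" "nge s tau' = length tau'" using w1(4) w2(3) 1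
        by (auto intro!: nge_full)
      thus ?thesis using kk by simp
    next
      case 2 thus ?thesis using tgt_shape(2)[OF v1] tgt_shape(2)[OF v2'] eq' yy by simp
    next
      case 3 thus ?thesis using tgt_shape(3)[OF v1, of s] tgt_shape(3)[OF v2', of s] eq' yy by simp
    next
      case 4
      have "nge s tau = 0" "nge s tau' = 0" using w1(4) w2(3) 4 by (auto intro!: nge_zero)
      thus ?thesis by simp
    qed
  qed
  hence tt: "tau = tau'" using sorted_desc_eq[OF w1(3) w2(2)] by blast
  have "mu ! i = mu' ! i" if i: "i < j" for i
  proof -
    have r: "1 \<le> Suc i" "Suc i \<le> j" using i by auto
    have "nge (Suc i) (conj (map (\<lambda>x. x - mu ! (j - 1)) mu)) = nge (Suc i) (conj (map (\<lambda>x. x - mu' ! (j - 1)) mu'))"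
      using tgt_shape(4)[OF v1 r(1)] tgt_shape(4)[OF v2' r(1)] eq' by simp
    hence "mu ! i - mu ! (j - 1) = mu' ! i - mu' ! (j - 1)"
      using rest_props(6)[OF v1 r] rest_props(6)[OF v2' r] by simp
    moreover have "mu ! (j - 1) \<le> mu ! i" using valid_y(1)[OF v1] i w1(2) by simp
    moreover have "mu' ! (j - 1) \<le> mu' ! i" using valid_y(1)[OF v2'] i w2(1) by simp
    ultimately show ?thesis using yy by simp
  qed
  hence "mu = mu'" using w1(2) w2(1) by (simp add: nth_equalityI)
  thus ?thesis using jj tt by simp
qed

theorem lemma5p5:
  fixes n :: nat
  assumes "n \<ge> 1"
  shows "\<exists>f. inj_on f (Q5bar n) \<and> f ` Q5bar n \<subseteq> P8 n"
proof -
  define f where "f xs = tgt (durfee xs) (map (\<lambda>x. x - durfee xs) (take (durfee xs) xs)) (drop (Suc (durfee xs)) xs)" for xs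
  have inj: "inj_on f (Q5bar n)"
  proof (rule inj_onI)
    fix xs zs assume xs: "xs \<in> Q5bar n" and zs: "zs \<in> Q5bar n" and e: "f xs = f zs"
    note sx = Q5_struct[OF xs] and sz = Q5_struct[OF zs]
    have e2: "tgt (durfee xs) (map (\<lambda>x. x - durfee xs) (take (durfee xs) xs)) (drop (Suc (durfee xs)) xs) =
      tgt (durfee zs) (map (\<lambda>x. x - durfee zs) (take (durfee zs) zs)) (drop (Suc (durfee zs)) zs)"
      using e by (simp add: f_def)
    have "durfee xs = durfee zs \<and> map (\<lambda>x. x - durfee xs) (take (durfee xs) xs) = map (\<lambda>x. x - durfee zs) (take (durfee zs) zs)
       \<and> drop (Suc (durfee xs)) xs = drop (Suc (durfee zs)) zs"
      using tgt_inj[OF conjunct1[OF sx] conjunct1[OF sz] e2] .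
    thus "xs = zs" using sx sz by metis
  qed
  have img: "f ` Q5bar n \<subseteq> P8 n"
  proof
    fix T assume "T \<in> f ` Q5bar n"
    then obtain xs where xs: "xs \<in> Q5bar n" and T: "T = f xs" by auto
    note sx = Q5_struct[OF xs]
    define j where "j = durfee xs"
    define mu where "mu = map (\<lambda>x. x - j) (take j xs)"
    define tau where "tau = drop (Suc j) xs"
    have v: "valid j mu tau" and xe: "xs = src j mu tau" and sn: "sum_list xs = n"
      using sx by (simp_all add: j_def mu_def tau_def)
    have Tt: "T = tgt j mu tau" by (simp add: T f_def j_def mu_def tau_def)
    note tp = tgt_props[OF v, folded Tt]
    have j1: "1 \<le> j" using v by (simp add: valid_def)
    show "T \<in> P8 n"
      unfolding P8_def partitions_of_def Let_def
      using tp j1 sn xe by simp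
  qed
  show ?thesis using inj img by blast
qed

end
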